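(* Let $\Omega=\{z\in\mathbb{C}^n \mid r(z)<0\}$ be a bounded domain with $C^{1,1}$-smooth boundary, where $r$ is a $C^{1,1}$ defining function with $dr\neq 0$ on $b\Omega$. Then there exists a constant $C>0$ such that \[ F^K_\Omega(z,X)\ge C\frac{|\langle\partial r(z),X\rangle|}{|r(z)|^{1/2}} \] for all $z\in\Omega$ and all $X\in\mathbb{C}^n$.
   Context: $\langle\partial r(z),X\rangle=\sum_{j=1}^n \frac{\partial r}{\partial z_j}(z)X_j$. For a domain $\Omega\subset\mathbb{C}^n$, $z\in\Omega$ and $X\in\mathbb{C}^n$, the Kobayashi(–Royden) metric is $F^K_\Omega(z,X)=\inf\{1/\lambda \mid \exists f\colon D\to\Omega \text{ holomorphic},\ f(0)=z,\ f'(0)=\lambda X,\ \lambda>0\}$, where $D$ is the unit disc in $\mathbb{C}$. *)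

theory Defs
  imports "HOL-Complex_Analysis.Complex_Analysis"
begin

definition holo_disc_map :: "(complex \<Rightarrow> complex^'n) \<Rightarrow> bool" where
  "holo_disc_map f \<longleftrightarrow> (\<forall>j. (\<lambda>w. f w $ j) holomorphic_on ball 0 1)"

definition kobayashi :: "(complex^'n) set \<Rightarrow> complex^'n \<Rightarrow> complex^'n \<Rightarrow> real" where
  "kobayashi \<Omega> z X = Inf {1 / l | l. l > 0 \<and>
      (\<exists>f. holo_disc_map f \<and> f ` ball 0 1 \<subseteq> \<Omega> \<and> f 0 = z \<and>
           (\<chi> j. deriv (\<lambda>w. f w $ j) 0) = (\<chi> j. complex_of_real l * X $ j))}"

text \<open>The pairing \<open>\<langle>\<partial>r(z),X\<rangle> = \<Sum>j (\<partial>r/\<partial>z_j)(z) X_j\<close> for a real function r,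
  with \<open>\<partial>r/\<partial>z_j = (\<partial>r/\<partial>x_j - i \<partial>r/\<partial>y_j)/2\<close>.\<close>
definition dz_pair :: "(complex^'n \<Rightarrow> real) \<Rightarrow> complex^'n \<Rightarrow> complex^'n \<Rightarrow> complex" where
  "dz_pair r z X = (\<Sum>j\<in>UNIV.
      (complex_of_real (frechet_derivative r (at z) (axis j 1))
        - \<i> * complex_of_real (frechet_derivative r (at z) (axis j \<i>))) / 2 * X $ j)"

definition C11_on :: "(complex^'n) set \<Rightarrow> (complex^'n \<Rightarrow> real) \<Rightarrow> bool" where
  "C11_on U r \<longleftrightarrow> (\<forall>z\<in>U. r differentiable (at z)) \<and>
     (\<exists>L. \<forall>z\<in>U. \<forall>w\<in>U.
        onorm (\<lambda>v. frechet_derivative r (at z) v - frechet_derivative r (at w) v) \<le> L * dist z w)"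

end

theory Submission
  imports Defs
begin

lemma disc_est:
  fixes g :: "complex \<Rightarrow> complex"
  assumes hol: "g holomorphic_on ball 0 1" and bd: "\<And>w. w \<in> ball 0 1 \<Longrightarrow> cmod (g w) \<le> R"
    and t: "cmod t \<le> 1/4"
  shows "cmod (g t - g 0 - deriv g 0 * t) \<le> 32 * (R+1) * (cmod t)^2"
    and "cmod (g t - g 0) \<le> 10 * (R+1) * cmod t"
proof -
  have fin: "\<And>w. w \<in> ball 0 1 \<Longrightarrow> g w \<in> ball 0 (R+1)"
    using bd by (simp add: dist_norm) (smt (verit))
  have R: "R + 1 \<ge> 0" using bd[of 0] by (smt (verit) norm_ge_zero centre_in_ball zero_less_one)
  have hd: "deriv g holomorphic_on ball 0 1" by (rule holomorphic_deriv[OF hol]) simp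
  have hdd: "deriv (deriv g) holomorphic_on ball 0 1" by (rule holomorphic_deriv[OF hd]) simp
  have D1: "\<And>x. x \<in> ball 0 1 \<Longrightarrow> (g has_field_derivative deriv g x) (at x)"
    using hol holomorphic_derivI open_ball by blast
  have D2: "\<And>x. x \<in> ball 0 1 \<Longrightarrow> (deriv g has_field_derivative deriv (deriv g) x) (at x)"
    using hd holomorphic_derivI open_ball by blast
  have B2: "cmod (deriv (deriv g) x) \<le> 32 * (R+1)" if x: "x \<in> cball 0 (1/4)" for x
  proof -
    have sub: "cball x (1/2) \<subseteq> ball 0 1"
    proof
      fix y assume "y \<in> cball x (1/2)"
      then have "norm (y - x) \<le> 1/2" by (simp add: dist_norm norm_minus_commute)
      moreover have "norm x \<le> 1/4" using x by simp
      moreover have "norm y \<le> norm x + norm (y-x)" by (metis add.commute diff_add_cancel norm_triangle_ineq)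
      ultimately show "y \<in> ball 0 1" by simp
    qed
    have "cmod ((deriv ^^ 2) g x) \<le> fact 2 * (R+1) / (1/2)^2"
    proof (rule Cauchy_higher_deriv_bound)
      show "g holomorphic_on ball x (1/2)" using hol sub ball_subset_cball by (meson holomorphic_on_subset order_trans)
      show "continuous_on (cball x (1/2)) g"
        using holomorphic_on_imp_continuous_on[OF hol] sub continuous_on_subset by blast
      show "\<And>w. w \<in> ball x (1/2) \<Longrightarrow> g w \<in> ball 0 (R+1)"
        using fin sub ball_subset_cball by blast
    qed auto
    then show ?thesis using R by (simp add: numeral_2_eq_2)
  qed
  have tS: "t \<in> cball 0 (1/4)" using t by simp
  have "cmod (([g, deriv g, deriv (deriv g)] ! 0) t - (\<Sum>i\<le>1. ([g, deriv g, deriv (deriv g)] ! i) 0 * (t-0) ^ i / (fact i)))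
        \<le> (32*(R+1)) * cmod(t - 0)^(Suc 1) / fact 1"
  proof (rule complex_Taylor[where f="\<lambda>i. [g, deriv g, deriv (deriv g)] ! i" and S="cball 0 (1/4)"])
    fix i :: nat and x :: complex assume x: "x \<in> cball 0 (1/4)" and i: "i \<le> 1"
    have xb: "x \<in> ball 0 1" using x by simp
    show "(([g, deriv g, deriv (deriv g)] ! i) has_field_derivative ([g, deriv g, deriv (deriv g)] ! Suc i) x) (at x within cball 0 (1/4))"
    proof -
      have "i = 0 \<or> i = 1" using i by linarith
      then show ?thesis
      proof
        assume "i = 0" then show ?thesis using D1[OF xb] by (simp add: has_field_derivative_at_within)
      next
        assume "i = 1" then show ?thesis using D2[OF xb] by (simp add: has_field_derivative_at_within)
      qed
    qed
  qed (use B2 tS in auto)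
  then show "cmod (g t - g 0 - deriv g 0 * t) \<le> 32 * (R+1) * (cmod t)^2"
    by (simp add: algebra_simps power2_eq_square)
  have c1: "cmod (deriv g 0) \<le> 2 * (R+1)"
  proof -
    have "cmod ((deriv ^^ 1) g 0) \<le> fact 1 * (R+1) / (1/2)^1"
    proof (rule Cauchy_higher_deriv_bound)
      show "g holomorphic_on ball 0 (1/2)" using hol by (rule holomorphic_on_subset) auto
      show "continuous_on (cball 0 (1/2)) g"
        by (rule continuous_on_subset[OF holomorphic_on_imp_continuous_on[OF hol]]) auto
      show "\<And>w. w \<in> ball 0 (1/2) \<Longrightarrow> g w \<in> ball 0 (R+1)"
        using fin by auto
    qed auto
    then show ?thesis by simp
  qed
  have "cmod (g t - g 0) \<le> cmod (g t - g 0 - deriv g 0 * t) + cmod (deriv g 0 * t)"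
    by (metis diff_add_cancel norm_triangle_ineq)
  also have "\<dots> \<le> 32 * (R+1) * (cmod t)^2 + 2 * (R+1) * cmod t"
    using \<open>cmod (g t - g 0 - deriv g 0 * t) \<le> _\<close> c1 by (simp add: norm_mult mult_right_mono add_mono)
  also have "\<dots> \<le> 10 * (R+1) * cmod t"
  proof -
    have "cmod t * cmod t \<le> cmod t * (1/4)" by (rule mult_left_mono[OF t norm_ge_zero])
    then have "(32 * (R+1)) * (cmod t * cmod t) \<le> (32 * (R+1)) * (cmod t * (1/4))"
      by (rule mult_left_mono) (use R in simp)
    then have "32 * (R+1) * (cmod t)^2 \<le> 8 * (R+1) * cmod t"
      by (simp add: power2_eq_square algebra_simps)
    then show ?thesis by (simp add: algebra_simps)
  qed
  finally show "cmod (g t - g 0) \<le> 10 * (R+1) * cmod t" .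
qed

lemma r_taylor:
  fixes r :: "complex^'n \<Rightarrow> real"
  assumes diff: "\<forall>z\<in>U. r differentiable (at z)"
   and lip: "\<forall>z\<in>U. \<forall>w\<in>U. onorm (\<lambda>v. frechet_derivative r (at z) v - frechet_derivative r (at w) v) \<le> L * dist z w"
   and L: "L \<ge> 0"
   and seg: "closed_segment x y \<subseteq> U"
  shows "\<bar>r y - r x - frechet_derivative r (at x) (y - x)\<bar> \<le> L * (norm (y - x))^2"
proof -
  define D where "D = frechet_derivative r (at x)"
  have xU: "x \<in> U" using seg by auto
  have Dd: "(r has_derivative D) (at x)" using diff xU frechet_derivative_works D_def by blast
  have bl: "bounded_linear D" using has_derivative_bounded_linear[OF Dd] .
  have derg: "((\<lambda>w. r w - D w) has_derivative (\<lambda>v. frechet_derivative r (at w) v - D v)) (at w within closed_segment x y)"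
    if w: "w \<in> closed_segment x y" for w
  proof -
    have "(r has_derivative frechet_derivative r (at w)) (at w)" using diff seg w frechet_derivative_works by blast
    moreover have "(D has_derivative D) (at w)" using bl by (rule bounded_linear_imp_has_derivative)
    ultimately have "((\<lambda>w. r w - D w) has_derivative (\<lambda>v. frechet_derivative r (at w) v - D v)) (at w)"
      by (rule has_derivative_diff)
    then show ?thesis by (rule has_derivative_at_withinI)
  qed
  have B: "onorm (\<lambda>v. frechet_derivative r (at w) v - D v) \<le> L * norm (y - x)"
    if w: "w \<in> closed_segment x y" for w
  proof -
    have "onorm (\<lambda>v. frechet_derivative r (at w) v - D v) \<le> L * dist w x"
      using lip seg w xU unfolding D_def by blast
    also have "\<dots> \<le> L * norm (y - x)"
      using dist_in_closed_segment[OF w] L by (simp add: dist_norm norm_minus_commute mult_left_mono)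
    finally show ?thesis .
  qed
  have "norm ((r y - D y) - (r x - D x)) \<le> (L * norm (y - x)) * norm (y - x)"
    by (rule differentiable_bound[OF convex_closed_segment derg B]) auto
  moreover have "D y - D x = D (y - x)" using bl by (simp add: linear_diff bounded_linear.linear)
  ultimately show ?thesis unfolding D_def[symmetric] by (simp add: power2_eq_square algebra_simps)
qed

lemma lin_dz:
  fixes D :: "complex^'n \<Rightarrow> real"
  assumes "linear D"
  shows "D w = Re (2 * (\<Sum>j\<in>UNIV. (complex_of_real (D (axis j 1)) - \<i> * complex_of_real (D (axis j \<i>))) / 2 * w $ j))"
proof -
  have w: "w = (\<Sum>j\<in>UNIV. Re (w$j) *\<^sub>R axis j 1 + Im (w$j) *\<^sub>R axis j \<i>)"
    by (simp add: vec_eq_iff axis_def complex_eq_iff if_distrib cong: if_cong)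
  have "D w = (\<Sum>j\<in>UNIV. Re (w$j) * D (axis j 1) + Im (w$j) * D (axis j \<i>))"
    by (subst w) (simp add: linear_sum[OF assms] linear_add[OF assms] linear_scale[OF assms])
  also have "\<dots> = Re (2 * (\<Sum>j\<in>UNIV. (complex_of_real (D (axis j 1)) - \<i> * complex_of_real (D (axis j \<i>))) / 2 * w $ j))"
    by (auto simp: sum_distrib_left Re_sum algebra_simps intro!: sum.cong)
  finally show ?thesis .
qed

lemma norm_l1_c: "norm (x::complex^'n) \<le> (\<Sum>i\<in>UNIV. norm (x$i))"
  unfolding norm_vec_def by (rule L2_set_le_sum) simp

lemma vec_est:
  fixes f :: "complex \<Rightarrow> complex^'n" and R :: real
  assumes hf: "holo_disc_map f" and bd: "\<And>w. w \<in> ball 0 1 \<Longrightarrow> norm (f w) \<le> R"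
    and t: "cmod t \<le> 1/4"
  shows "norm (f t - f 0) \<le> (CARD('n) * (10 * (R+1))) * cmod t"
    and "norm (f t - f 0 - (\<chi> j. deriv (\<lambda>w. f w $ j) 0 * t)) \<le> (CARD('n) * (32 * (R+1))) * (cmod t)^2"
proof -
  have hj: "(\<lambda>w. f w $ j) holomorphic_on ball 0 1" for j using hf unfolding holo_disc_map_def by blast
  have bj: "cmod (f w $ j) \<le> R" if "w \<in> ball 0 1" for j w
  proof -
    have "cmod (f w $ j) \<le> norm (f w)" by (rule Finite_Cartesian_Product.norm_nth_le)
    with bd[OF that] show ?thesis by linarith
  qed
  have e2: "cmod ((f t - f 0) $ j) \<le> 10 * (R+1) * cmod t" for j
    using disc_est(2)[OF hj bj t, of j] by simp
  have e1: "cmod ((f t - f 0 - (\<chi> j. deriv (\<lambda>w. f w $ j) 0 * t)) $ j) \<le> 32 * (R+1) * (cmod t)^2" for j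
    using disc_est(1)[OF hj bj t, of j] by simp
  have "norm (f t - f 0) \<le> (\<Sum>j\<in>UNIV. cmod ((f t - f 0) $ j))" by (rule norm_l1_c)
  also have "\<dots> \<le> (\<Sum>j\<in>(UNIV::'n set). 10 * (R+1) * cmod t)"
    by (rule sum_mono) (rule e2)
  finally show "norm (f t - f 0) \<le> (CARD('n) * (10 * (R+1))) * cmod t" by simp
  have "norm (f t - f 0 - (\<chi> j. deriv (\<lambda>w. f w $ j) 0 * t)) \<le> (\<Sum>j\<in>UNIV. cmod ((f t - f 0 - (\<chi> j. deriv (\<lambda>w. f w $ j) 0 * t)) $ j))" by (rule norm_l1_c)
  also have "\<dots> \<le> (\<Sum>j\<in>(UNIV::'n set). 32 * (R+1) * (cmod t)^2)"
    by (rule sum_mono) (rule e1)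
  finally show "norm (f t - f 0 - (\<chi> j. deriv (\<lambda>w. f w $ j) 0 * t)) \<le> (CARD('n) * (32 * (R+1))) * (cmod t)^2" by simp
qed

lemma kob_nonempty:
  fixes z X :: "complex^'n"
  assumes "ball z \<rho> \<subseteq> \<Omega>" "\<rho> > 0"
  shows "{1 / l | l. l > 0 \<and>
      (\<exists>f. holo_disc_map f \<and> f ` ball 0 1 \<subseteq> \<Omega> \<and> f 0 = z \<and>
           (\<chi> j. deriv (\<lambda>w. f w $ j) 0) = (\<chi> j. complex_of_real l * X $ j))} \<noteq> {}"
proof -
  define c where "c = \<rho> / (1 + (\<Sum>j\<in>UNIV. cmod (X$j)))"
  have S0: "(\<Sum>j\<in>UNIV. cmod (X$j)) \<ge> 0" by (simp add: sum_nonneg)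
  have c: "c > 0" using assms(2) S0 unfolding c_def by simp
  define f where "f = (\<lambda>w. (\<chi> j. z$j + w * complex_of_real c * X$j) :: complex^'n)"
  have "holo_disc_map f" unfolding holo_disc_map_def f_def by (auto intro!: holomorphic_intros)
  moreover have "f ` ball 0 1 \<subseteq> \<Omega>"
  proof
    fix y assume "y \<in> f ` ball 0 1"
    then obtain w where w: "cmod w < 1" and y: "y = f w" by auto
    have "norm (y - z) \<le> (\<Sum>j\<in>UNIV. cmod ((y - z)$j))" by (rule norm_l1_c)
    also have "\<dots> = (\<Sum>j\<in>UNIV. cmod w * c * cmod (X$j))"
      using c by (simp add: y f_def norm_mult)
    also have "\<dots> = cmod w * c * (\<Sum>j\<in>UNIV. cmod (X$j))" by (simp add: sum_distrib_left)
    also have "\<dots> \<le> c * (\<Sum>j\<in>UNIV. cmod (X$j))"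
    proof -
      have "cmod w * (c * (\<Sum>j\<in>UNIV. cmod (X$j))) \<le> c * (\<Sum>j\<in>UNIV. cmod (X$j))"
        by (rule mult_left_le_one_le) (use w c S0 in auto)
      then show ?thesis by (simp add: mult.assoc)
    qed
    also have "\<dots> < \<rho>" unfolding c_def using assms(2) S0 by (simp add: field_simps)
    finally have "dist z y < \<rho>" by (simp add: dist_norm norm_minus_commute)
    then show "y \<in> \<Omega>" using assms(1) by auto
  qed
  moreover have "f 0 = z" by (simp add: f_def vec_eq_iff)
  moreover have "(\<chi> j. deriv (\<lambda>w. f w $ j) 0) = (\<chi> j. complex_of_real c * X $ j)"
  proof -
    have "deriv (\<lambda>w. f w $ j) 0 = complex_of_real c * X $ j" for j
    proof (rule DERIV_imp_deriv)
      show "((\<lambda>w. f w $ j) has_field_derivative complex_of_real c * X $ j) (at 0)"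
        unfolding f_def by (auto intro!: derivative_eq_intros)
    qed
    then show ?thesis by simp
  qed
  ultimately have "1 / c \<in> {1 / l | l. l > 0 \<and>
      (\<exists>f. holo_disc_map f \<and> f ` ball 0 1 \<subseteq> \<Omega> \<and> f 0 = z \<and>
           (\<chi> j. deriv (\<lambda>w. f w $ j) 0) = (\<chi> j. complex_of_real l * X $ j))}" using c by blast
  then show ?thesis by blast
qed

lemma final_arith:
  fixes e s0 Mr C1 A :: real
  assumes e: "e > 0" and s0: "s0 > 0" and Mr: "e \<le> Mr" and C1: "C1 \<ge> 0"
    and step: "\<And>s. 0 < s \<Longrightarrow> s \<le> s0 \<Longrightarrow> A * s \<le> e + C1 * s^2"
  shows "A \<le> (sqrt Mr / s0 + C1 + 1) * sqrt e"
proof -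
  have se: "sqrt e > 0" using e by simp
  have ee: "e = sqrt e * sqrt e" using e by simp
  have Mr0: "sqrt Mr \<ge> 0" using Mr e by simp
  have q: "sqrt Mr / s0 \<ge> 0" using Mr0 s0 by simp
  show ?thesis
  proof (cases "sqrt e \<le> s0")
    case True
    have "A * sqrt e \<le> e + C1 * (sqrt e)^2" using step[OF se True] .
    also have "\<dots> = sqrt e * ((1 + C1) * sqrt e)" using e by (simp add: algebra_simps)
    finally have "sqrt e * A \<le> sqrt e * ((1 + C1) * sqrt e)" by (simp add: mult.commute)
    then have "A \<le> (1 + C1) * sqrt e" using se by (simp add: mult_le_cancel_left_pos)
    also have "\<dots> \<le> (sqrt Mr / s0 + C1 + 1) * sqrt e" using q se by (simp add: mult_right_mono)
    finally show ?thesis .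
  next
    case False
    have "A * s0 \<le> e + C1 * s0^2" using step[OF s0 order_refl] .
    also have "e \<le> sqrt Mr * sqrt e" using ee Mr se by (metis mult_right_mono less_imp_le real_sqrt_le_mono)
    also have "C1 * s0^2 \<le> C1 * (s0 * sqrt e)"
      using False s0 C1 by (intro mult_left_mono) (simp_all add: power2_eq_square)
    finally have "s0 * A \<le> s0 * ((sqrt Mr / s0 + C1) * sqrt e)"
      using s0 by (simp add: algebra_simps)
    then have "A \<le> (sqrt Mr / s0 + C1) * sqrt e" using s0 by (simp add: mult_le_cancel_left_pos)
    also have "\<dots> \<le> (sqrt Mr / s0 + C1 + 1) * sqrt e" using se by simp
    finally show ?thesis .
  qed
qed

lemma step_est:
  fixes r :: "complex^'n \<Rightarrow> real" and f :: "complex \<Rightarrow> complex^'n" and L MD R s l \<delta> :: real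
  assumes diff: "\<forall>z\<in>U. r differentiable (at z)"
   and lip: "\<forall>z\<in>U. \<forall>w\<in>U. onorm (\<lambda>v. frechet_derivative r (at z) v - frechet_derivative r (at w) v) \<le> L * dist z w"
   and L: "L \<ge> 0"
   and hf: "holo_disc_map f" and fim: "f ` ball 0 1 \<subseteq> \<Omega>" and f0: "f 0 = z"
   and fd: "(\<chi> j. deriv (\<lambda>w. f w $ j) 0) = (\<chi> j. complex_of_real l * X $ j)"
   and neg: "\<forall>y\<in>\<Omega>. r y < 0" and R: "\<forall>x\<in>\<Omega>. norm x \<le> R"
   and MD: "\<forall>w. \<bar>frechet_derivative r (at z) w\<bar> \<le> MD * norm w" and MD0: "MD \<ge> 0"
   and ballU: "ball z \<delta> \<subseteq> U" and l: "l > 0"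
   and s: "0 < s" "s \<le> 1/4" "CARD('n) * (10*(R+1)) * s < \<delta>"
  shows "2 * l * cmod (dz_pair r z X) * s \<le> - r z + (MD * (CARD('n) * (32*(R+1))) + L * (CARD('n) * (10*(R+1)))^2) * s^2"
proof -
  define K1 where "K1 = CARD('n) * (10*(R+1))"
  define K2 where "K2 = CARD('n) * (32*(R+1))"
  define a where "a = dz_pair r z X"
  define D where "D = frechet_derivative r (at z)"
  have zO: "z \<in> \<Omega>" using fim f0 by force
  have R0: "R \<ge> 0" using R zO norm_ge_zero order_trans by blast
  have K1: "K1 \<ge> 0" "K2 \<ge> 0" using R0 by (simp_all add: K1_def K2_def)
  have "K1 * s \<ge> 0" using K1(1) s(1) by simp
  then have d0: "\<delta> > 0" using s(3) unfolding K1_def[symmetric] by linarith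
  have zU: "z \<in> U" using ballU d0 by auto
  have lin: "linear D" unfolding D_def
    using diff zU frechet_derivative_works has_derivative_linear by blast
  have bdf: "\<And>w. w \<in> ball 0 1 \<Longrightarrow> norm (f w) \<le> R" using fim R by blast
  have C0: "MD * K2 + L * K1^2 \<ge> 0" using MD0 K1 L by simp
  show ?thesis
  proof (cases "a = 0")
    case True
    have "- r z > 0" using neg zO by simp
    moreover have "(MD * K2 + L * K1^2) * s^2 \<ge> 0" using C0 by simp
    ultimately show ?thesis using True unfolding a_def K1_def K2_def by simp
  next
    case False
    define t where "t = complex_of_real s * cnj a / complex_of_real (cmod a)"
    have ct: "cmod t = s" using False s(1) by (simp add: t_def norm_mult norm_divide)
    have tb: "t \<in> ball 0 1" "cmod t \<le> 1/4" using ct s by auto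
    define y where "y = f t"
    define vt where "vt = (\<chi> j. complex_of_real l * X $ j * t)"
    have vt: "(\<chi> j. deriv (\<lambda>w. f w $ j) 0 * t) = vt"
    proof -
      have "deriv (\<lambda>w. f w $ j) 0 = complex_of_real l * X $ j" for j
      proof -
        have "(\<chi> j. deriv (\<lambda>w. f w $ j) 0) $ j = (\<chi> j. complex_of_real l * X $ j) $ j" using fd by simp
        then show ?thesis by simp
      qed
      then show ?thesis by (simp add: vt_def)
    qed
    have e1: "norm (y - z) \<le> K1 * s" using vec_est(1)[OF hf bdf tb(2)] f0 ct unfolding y_def K1_def by simp
    have e2: "norm (y - z - vt) \<le> K2 * s^2" using vec_est(2)[OF hf bdf tb(2)] f0 ct vt unfolding y_def K2_def by simp
    have yO: "y \<in> \<Omega>" using fim tb unfolding y_def by blast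
    have ry: "r y < 0" using neg yO by blast
    have "dist z y = norm (y - z)" by (simp add: dist_norm norm_minus_commute)
    then have yb: "y \<in> ball z \<delta>" using e1 s(3) unfolding K1_def[symmetric] by simp
    have seg: "closed_segment z y \<subseteq> U"
    proof -
      have "z \<in> ball z \<delta>" using d0 by simp
      then have "closed_segment z y \<subseteq> ball z \<delta>" using yb by (simp add: closed_segment_subset)
      then show ?thesis using ballU by (rule order_trans)
    qed
    have tay: "\<bar>r y - r z - D (y - z)\<bar> \<le> L * (norm (y - z))^2"
      unfolding D_def by (rule r_taylor[OF diff lip L seg])
    have "(norm (y - z))^2 \<le> (K1 * s)^2" using e1 by (simp add: power_mono)
    then have "L * (norm (y - z))^2 \<le> L * (K1 * s)^2" using L by (rule mult_left_mono)
    then have tay2: "\<bar>r y - r z - D (y - z)\<bar> \<le> L * K1^2 * s^2"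
      using tay by (simp add: power_mult_distrib mult.assoc)
    have rem: "\<bar>D (y - z - vt)\<bar> \<le> MD * K2 * s^2"
    proof -
      have "\<bar>D (y - z - vt)\<bar> \<le> MD * norm (y - z - vt)" using MD unfolding D_def by blast
      also have "\<dots> \<le> MD * (K2 * s^2)" using e2 MD0 by (rule mult_left_mono)
      finally show ?thesis by simp
    qed
    have split: "D (y - z) = D vt + D (y - z - vt)" using lin by (simp add: linear_diff)
    have dzv: "dz_pair r z vt = (complex_of_real l * t) * a"
      unfolding a_def dz_pair_def sum_distrib_left by (rule sum.cong) (simp_all add: vt_def mult_ac)
    have ta: "t * a = complex_of_real (s * cmod a)"
    proof -
      have "t * a = complex_of_real s * (cnj a * a) / complex_of_real (cmod a)" by (simp add: t_def)
      also have "cnj a * a = complex_of_real ((cmod a)^2)"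
      proof -
        have h: "complex_of_real ((cmod a)^2) = a * cnj a" using complex_norm_square[of a] by simp
        show ?thesis by (subst mult.commute) (rule h[symmetric])
      qed
      finally show ?thesis using False by (simp add: power2_eq_square)
    qed
    have Dvt: "D vt = 2 * l * s * cmod a"
    proof -
      have "D vt = Re (2 * dz_pair r z vt)" unfolding dz_pair_def D_def by (rule lin_dz[OF lin[unfolded D_def]])
      also have "\<dots> = Re (2 * complex_of_real l * (t * a))" using dzv by (simp add: algebra_simps)
      also have "\<dots> = 2 * l * s * cmod a" using ta by simp
      finally show ?thesis .
    qed
    have "2 * l * s * cmod a \<le> - r z + L * K1^2 * s^2 + MD * K2 * s^2"
      using Dvt split tay2 rem ry by linarith
    then show ?thesis unfolding a_def K1_def[symmetric] K2_def[symmetric] by (simp add: algebra_simps)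
  qed
qed

theorem theorem2p5:
  fixes \<Omega> U :: "(complex^'n) set" and r :: "complex^'n \<Rightarrow> real"
  assumes "open U" and "closure \<Omega> \<subseteq> U"
    and "C11_on U r"
    and "\<Omega> = {z\<in>U. r z < 0}"
    and "bounded \<Omega>" and "connected \<Omega>" and "\<Omega> \<noteq> {}"
    and "\<forall>p\<in>frontier \<Omega>. frechet_derivative r (at p) \<noteq> (\<lambda>v. 0)"
  shows "\<exists>C>0. \<forall>z\<in>\<Omega>. \<forall>X.
           kobayashi \<Omega> z X \<ge> C * cmod (dz_pair r z X) / sqrt \<bar>r z\<bar>"
proof -
  from assms(3) obtain L0 where diff: "\<forall>z\<in>U. r differentiable (at z)"
    and lip0: "\<forall>z\<in>U. \<forall>w\<in>U. onorm (\<lambda>v. frechet_derivative r (at z) v - frechet_derivative r (at w) v) \<le> L0 * dist z w"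
    unfolding C11_on_def by blast
  define L where "L = \<bar>L0\<bar>"
  have L: "L \<ge> 0" by (simp add: L_def)
  have lip: "\<forall>z\<in>U. \<forall>w\<in>U. onorm (\<lambda>v. frechet_derivative r (at z) v - frechet_derivative r (at w) v) \<le> L * dist z w"
  proof (intro ballI)
    fix z w assume zw: "z \<in> U" "w \<in> U"
    have "onorm (\<lambda>v. frechet_derivative r (at z) v - frechet_derivative r (at w) v) \<le> L0 * dist z w"
      using lip0 zw by blast
    also have "\<dots> \<le> L * dist z w" unfolding L_def by (intro mult_right_mono) auto
    finally show "onorm (\<lambda>v. frechet_derivative r (at z) v - frechet_derivative r (at w) v) \<le> L * dist z w" .
  qed
  have cont: "continuous_on U r"
    using diff by (meson continuous_at_imp_continuous_on differentiable_imp_continuous_within)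
  have OmU: "\<Omega> \<subseteq> U" using assms(4) by blast
  have neg: "\<forall>y\<in>\<Omega>. r y < 0" using assms(4) by blast
  have "\<Omega> = U \<inter> r -` {..<0}" using assms(4) by auto
  then have openO: "open \<Omega>" using continuous_open_preimage[OF cont assms(1)] by simp
  have cpt: "compact (closure \<Omega>)" using assms(5) by (simp add: compact_closure)
  obtain \<delta> where d0: "\<delta> > 0" and dU: "(\<Union>x\<in>closure \<Omega>. ball x \<delta>) \<subseteq> U"
    using compact_subset_open_imp_ball_epsilon_subset[OF cpt assms(1) assms(2)] by blast
  have ballU: "ball z \<delta> \<subseteq> U" if "z \<in> \<Omega>" for z
    using dU that closure_subset by blast
  obtain R where R: "\<forall>x\<in>\<Omega>. norm x \<le> R" using assms(5) bounded_iff by blast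
  obtain z0 where z0: "z0 \<in> \<Omega>" using assms(7) by blast
  have R0: "R \<ge> 0" using R z0 norm_ge_zero order_trans by blast
  have "bounded (r ` closure \<Omega>)"
    by (rule compact_imp_bounded[OF compact_continuous_image[OF continuous_on_subset[OF cont assms(2)] cpt]])
  then obtain Mr where Mr0: "\<forall>y\<in>r ` closure \<Omega>. norm y \<le> Mr" using bounded_iff by blast
  have Mr: "\<bar>r z\<bar> \<le> Mr" if "z \<in> \<Omega>" for z using Mr0 that closure_subset by fastforce
  define MD where "MD = onorm (frechet_derivative r (at z0)) + L * (2 * R)"
  have bl: "bounded_linear (frechet_derivative r (at z))" if "z \<in> U" for z
    using diff that frechet_derivative_works has_derivative_bounded_linear by blast
  have MD0: "MD \<ge> 0" unfolding MD_def using onorm_pos_le[OF bl] z0 OmU L R0 by auto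
  have MD: "\<forall>w. \<bar>frechet_derivative r (at z) w\<bar> \<le> MD * norm w" if z: "z \<in> \<Omega>" for z
  proof
    fix w
    have zU: "z \<in> U" and z0U: "z0 \<in> U" using z z0 OmU by auto
    have h1: "\<bar>frechet_derivative r (at z0) w\<bar> \<le> onorm (frechet_derivative r (at z0)) * norm w"
      using onorm[OF bl[OF z0U], of w] by simp
    have h2: "\<bar>frechet_derivative r (at z) w - frechet_derivative r (at z0) w\<bar>
        \<le> onorm (\<lambda>v. frechet_derivative r (at z) v - frechet_derivative r (at z0) v) * norm w"
      using onorm[OF bounded_linear_sub[OF bl[OF zU] bl[OF z0U]], of w] by simp
    have "dist z z0 \<le> norm z + norm z0" by (simp add: dist_norm norm_triangle_ineq4)
    also have "\<dots> \<le> 2 * R"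
    proof -
      have "norm z \<le> R" "norm z0 \<le> R" using R z z0 by auto
      then show ?thesis by linarith
    qed
    finally have "L * dist z z0 \<le> L * (2 * R)" using L by (rule mult_left_mono)
    then have h3: "onorm (\<lambda>v. frechet_derivative r (at z) v - frechet_derivative r (at z0) v) \<le> L * (2 * R)"
      using lip zU z0U by fastforce
    have "onorm (\<lambda>v. frechet_derivative r (at z) v - frechet_derivative r (at z0) v) * norm w \<le> L * (2 * R) * norm w"
      using h3 by (rule mult_right_mono) simp
    then show "\<bar>frechet_derivative r (at z) w\<bar> \<le> MD * norm w"
      using h1 h2 unfolding MD_def by (simp add: algebra_simps)
  qed
  define K1 where "K1 = CARD('n) * (10*(R+1))"
  define K2 where "K2 = CARD('n) * (32*(R+1))"
  define s0 where "s0 = min (1/4) (\<delta> / (K1 + 1))"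
  define C1 where "C1 = MD * K2 + L * K1^2"
  define Kc where "Kc = sqrt Mr / s0 + C1 + 1"
  have K1: "K1 \<ge> 0" "K2 \<ge> 0" using R0 by (simp_all add: K1_def K2_def)
  have s0: "s0 > 0" using d0 K1 by (simp add: s0_def)
  have C1: "C1 \<ge> 0" using MD0 K1 L by (simp add: C1_def)
  have Mrp: "Mr \<ge> 0" using Mr[OF z0] by linarith
  have "sqrt Mr / s0 \<ge> 0" using s0 Mrp by simp
  then have Kc: "Kc > 0" using C1 unfolding Kc_def by linarith
  have key: "2 * l * cmod (dz_pair r z X) \<le> Kc * sqrt (- r z)"
    if z: "z \<in> \<Omega>" and l: "l > 0" and hf: "holo_disc_map f" and fim: "f ` ball 0 1 \<subseteq> \<Omega>" and f0: "f 0 = z"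
      and fd: "(\<chi> j. deriv (\<lambda>w. f w $ j) 0) = (\<chi> j. complex_of_real l * X $ j)"
    for z X l f
  proof -
    have e: "- r z > 0" using neg z by simp
    have eM: "- r z \<le> Mr" using Mr[OF z] by linarith
    have step: "2 * l * cmod (dz_pair r z X) * s \<le> - r z + C1 * s^2" if s: "0 < s" "s \<le> s0" for s
    proof -
      have s1: "s \<le> 1/4" using s unfolding s0_def by linarith
      have "s \<le> \<delta> / (K1 + 1)" using s unfolding s0_def by linarith
      then have "s * (K1 + 1) \<le> \<delta>" using K1 by (simp add: pos_le_divide_eq)
      then have s3: "K1 * s < \<delta>" using s by (simp add: algebra_simps)
      show ?thesis
        using step_est[OF diff lip L hf fim f0 fd neg R MD[OF z] MD0 ballU[OF z] l s(1) s1 s3[unfolded K1_def]]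
        unfolding C1_def K1_def K2_def .
    qed
    show ?thesis unfolding Kc_def by (rule final_arith[OF e s0 eM C1 step])
  qed
  show ?thesis
  proof (intro exI[of _ "2 / Kc"] conjI ballI allI)
    show "2 / Kc > 0" using Kc by simp
    fix z X assume z: "z \<in> \<Omega>"
    obtain \<rho> where rho: "\<rho> > 0" "ball z \<rho> \<subseteq> \<Omega>" using openO z openE by blast
    have e: "- r z > 0" using neg z by simp
    have az: "\<bar>r z\<bar> = - r z" using e by simp
    show "2 / Kc * cmod (dz_pair r z X) / sqrt \<bar>r z\<bar> \<le> kobayashi \<Omega> z X"
      unfolding kobayashi_def
    proof (rule cInf_greatest[OF kob_nonempty[OF rho(2) rho(1)]])
      fix x assume "x \<in> {1 / l | l. l > 0 \<and>
        (\<exists>f. holo_disc_map f \<and> f ` ball 0 1 \<subseteq> \<Omega> \<and> f 0 = z \<and>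
           (\<chi> j. deriv (\<lambda>w. f w $ j) 0) = (\<chi> j. complex_of_real l * X $ j))}"
      then obtain l f where x: "x = 1 / l" and l: "l > 0" and hf: "holo_disc_map f" and fim: "f ` ball 0 1 \<subseteq> \<Omega>"
        and f0: "f 0 = z" and fd: "(\<chi> j. deriv (\<lambda>w. f w $ j) 0) = (\<chi> j. complex_of_real l * X $ j)"
        by blast
      have k: "2 * l * cmod (dz_pair r z X) \<le> Kc * sqrt (- r z)" by (rule key[OF z l hf fim f0 fd])
      have se: "sqrt (- r z) > 0" using e by simp
      have "2 / Kc * cmod (dz_pair r z X) / sqrt (- r z) = (2 * l * cmod (dz_pair r z X)) / (Kc * sqrt (- r z)) * (1 / l)"
        using l by (simp add: field_simps)
      also have "\<dots> \<le> 1 * (1 / l)"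
        using k Kc se l by (intro mult_right_mono) (simp_all add: divide_le_eq_1)
      finally show "2 / Kc * cmod (dz_pair r z X) / sqrt \<bar>r z\<bar> \<le> x" using az x by simp
    qed
  qed
qed

end
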